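(* Let $d\ge1$, $k\in\{1,\dots,d\}$, and let $P\subset\{x\in\mathbb{R}^d:x_k>0\}$ be an $n$-dimensional polytope with $0\le n\le d-1$. Suppose there exists a hyperplane $\{x:\pi^\top x=\pi_0\}$ containing $P$ that is not orthogonal to $\bar H=\{x\in\mathbb{R}^d:x_k=0\}$ (i.e. $\pi_k\neq0$). Then: (i) $\mathrm{swp}_k(P)$ is an $(n+1)$-dimensional polytope; (ii) every $l$-face of $\mathrm{swp}_k(P)$ is either an $l$-face of $P$, or an $l$-face of $\mathrm{proj}_k(P)$, or equals $\mathrm{swp}_k(\Gamma^{l-1})$ for some $(l-1)$-face $\Gamma^{l-1}$ of $P$; and (iii) every face of $P$ and every face of $\mathrm{proj}_k(P)$ is a face of $\mathrm{swp}_k(P)$, and $\mathrm{swp}_k(\Gamma)$ is a face of $\mathrm{swp}_k(P)$ for every face $\Gamma$ of $P$.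
   Context: $e_k$ is the $k$-th standard unit vector. For $P\subset\mathbb{R}^d$: $\mathrm{proj}_k(P)=\{p-p_ke_k:p\in P\}$ and $\mathrm{swp}_k(P)=\{p-\theta p_ke_k:p\in P,\theta\in[0,1]\}$. A polytope is the convex hull of finitely many points; its faces are the intersections with supporting hyperplanes (together with the polytope itself), the dimension of a face is that of its affine hull, and an $l$-face is a face of dimension $l$. *)

theory Defs
  imports "HOL-Analysis.Analysis"
begin

text \<open>The coordinate direction e_k is a basis vector b of the Euclidean space;
  x_k is x \<bullet> b.\<close>

definition proj_k :: "'a::euclidean_space \<Rightarrow> 'a set \<Rightarrow> 'a set" where
  "proj_k b P = {p - (p \<bullet> b) *\<^sub>R b | p. p \<in> P}"

definition swp_k :: "'a::euclidean_space \<Rightarrow> 'a set \<Rightarrow> 'a set" where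
  "swp_k b P = {p - (\<theta> * (p \<bullet> b)) *\<^sub>R b | p \<theta>. p \<in> P \<and> 0 \<le> \<theta> \<and> \<theta> \<le> 1}"

definition is_face :: "'a::euclidean_space set \<Rightarrow> 'a set \<Rightarrow> bool" where
  "is_face F P \<longleftrightarrow> F = P \<or>
     (\<exists>a c. a \<noteq> 0 \<and> P \<subseteq> {x. a \<bullet> x \<le> c} \<and> P \<inter> {x. a \<bullet> x = c} \<noteq> {}
            \<and> F = P \<inter> {x. a \<bullet> x = c})"

end

theory Submission
  imports Defs
begin

lemma swp_mem:
  assumes pos: "\<forall>p\<in>P. p \<bullet> b > 0"
  shows "q \<in> swp_k b P \<longleftrightarrow> (\<exists>p t. p \<in> P \<and> 0 \<le> t \<and> t \<le> p \<bullet> b \<and> q = p - t *\<^sub>R b)"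
proof
  assume "q \<in> swp_k b P"
  then obtain p \<theta> where h: "p \<in> P" "0 \<le> \<theta>" "\<theta> \<le> 1" "q = p - (\<theta> * (p \<bullet> b)) *\<^sub>R b"
    unfolding swp_k_def by blast
  have "p \<bullet> b > 0" using pos h by blast
  then have "\<theta> * (p \<bullet> b) \<le> p \<bullet> b" "0 \<le> \<theta> * (p \<bullet> b)" using h
    by (auto simp: mult_left_le_one_le)
  then show "\<exists>p t. p \<in> P \<and> 0 \<le> t \<and> t \<le> p \<bullet> b \<and> q = p - t *\<^sub>R b" using h by blast
next
  assume "\<exists>p t. p \<in> P \<and> 0 \<le> t \<and> t \<le> p \<bullet> b \<and> q = p - t *\<^sub>R b"
  then obtain p t where h: "p \<in> P" "0 \<le> t" "t \<le> p \<bullet> b" "q = p - t *\<^sub>R b" by blast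
  have pb: "p \<bullet> b > 0" using pos h by blast
  define \<theta> where "\<theta> = t / (p \<bullet> b)"
  have "0 \<le> \<theta>" "\<theta> \<le> 1" "t = \<theta> * (p \<bullet> b)" using h pb by (auto simp: \<theta>_def field_simps)
  then show "q \<in> swp_k b P" unfolding swp_k_def using h by blast
qed

lemma proj_mem: "q \<in> proj_k b P \<longleftrightarrow> (\<exists>p\<in>P. q = p - (p \<bullet> b) *\<^sub>R b)"
  by (auto simp: proj_k_def)

lemma P_sub_swp: "P \<subseteq> swp_k b P"
proof
  fix p assume "p \<in> P"
  moreover have "p = p - (0 * (p \<bullet> b)) *\<^sub>R b" by simp
  ultimately show "p \<in> swp_k b P" unfolding swp_k_def by fastforce
qed

lemma proj_sub_swp: "proj_k b P \<subseteq> swp_k b P"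
proof
  fix q assume "q \<in> proj_k b P"
  then obtain p where "p \<in> P" "q = p - (p \<bullet> b) *\<^sub>R b" by (auto simp: proj_k_def)
  moreover have "q = p - (1 * (p \<bullet> b)) *\<^sub>R b" using calculation by simp
  ultimately show "q \<in> swp_k b P" unfolding swp_k_def by fastforce
qed

lemma swp_convex:
  assumes pos: "\<forall>p\<in>P. p \<bullet> b > 0" and cv: "convex P"
  shows "convex (swp_k b P)"
  unfolding convex_alt
proof (intro ballI allI impI)
  fix x y and u :: real
  assume x: "x \<in> swp_k b P" and y: "y \<in> swp_k b P" and u: "0 \<le> u \<and> u \<le> 1"
  obtain p s where p: "p \<in> P" "0 \<le> s" "s \<le> p \<bullet> b" "x = p - s *\<^sub>R b"
    using x swp_mem[OF pos] by blast
  obtain q t where q: "q \<in> P" "0 \<le> t" "t \<le> q \<bullet> b" "y = q - t *\<^sub>R b"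
    using y swp_mem[OF pos] by blast
  have m: "(1 - u) *\<^sub>R p + u *\<^sub>R q \<in> P" using cv p q u by (simp add: convex_alt)
  have "0 \<le> (1 - u) * s + u * t" using p q u by simp
  moreover have "(1 - u) * s + u * t \<le> ((1 - u) *\<^sub>R p + u *\<^sub>R q) \<bullet> b"
    using p q u by (simp add: inner_add_left add_mono mult_left_mono)
  moreover have "(1 - u) *\<^sub>R x + u *\<^sub>R y = ((1 - u) *\<^sub>R p + u *\<^sub>R q) - ((1 - u) * s + u * t) *\<^sub>R b"
    unfolding p(4) q(4) by (simp add: algebra_simps)
  ultimately show "(1 - u) *\<^sub>R x + u *\<^sub>R y \<in> swp_k b P"
    using m swp_mem[OF pos] by blast
qed

lemma faceP:
  assumes pos: "\<forall>p\<in>P. p \<bullet> b > 0" and hpb: "\<pi> \<bullet> b > 0" and hp: "\<forall>p\<in>P. \<pi> \<bullet> p = \<pi>0"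
    and sub: "P \<subseteq> {x. a \<bullet> x \<le> c}" and ne: "P \<inter> {x. a \<bullet> x = c} \<noteq> {}"
  shows "is_face (P \<inter> {x. a \<bullet> x = c}) (swp_k b P)"
proof -
  define \<mu> where "\<mu> = (\<bar>a \<bullet> b\<bar> + 1) / (\<pi> \<bullet> b)"
  define a' where "a' = a + \<mu> *\<^sub>R \<pi>"
  define c' where "c' = c + \<mu> * \<pi>0"
  have ab: "a' \<bullet> b > 0" using hpb by (simp add: a'_def \<mu>_def inner_add_left)
  have key: "a' \<bullet> (p - t *\<^sub>R b) = a \<bullet> p + \<mu> * \<pi>0 - t * (a' \<bullet> b)" if "p \<in> P" for p t
    using hp that by (simp add: a'_def inner_diff_right inner_add_left algebra_simps)
  have a'0: "a' \<noteq> 0" using ab by auto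
  have s1: "swp_k b P \<subseteq> {x. a' \<bullet> x \<le> c'}"
  proof
    fix q assume "q \<in> swp_k b P"
    then obtain p t where h: "p \<in> P" "0 \<le> t" "t \<le> p \<bullet> b" "q = p - t *\<^sub>R b"
      using swp_mem[OF pos] by blast
    have "0 \<le> t * (a' \<bullet> b)" using h ab by simp
    then show "q \<in> {x. a' \<bullet> x \<le> c'}" using key[OF h(1), of t] h sub by (auto simp: c'_def)
  qed
  have s2: "P \<inter> {x. a \<bullet> x = c} = swp_k b P \<inter> {x. a' \<bullet> x = c'}"
  proof
    show "P \<inter> {x. a \<bullet> x = c} \<subseteq> swp_k b P \<inter> {x. a' \<bullet> x = c'}"
      using P_sub_swp[of P b] key[of _ 0] by (auto simp: c'_def)
  next
    show "swp_k b P \<inter> {x. a' \<bullet> x = c'} \<subseteq> P \<inter> {x. a \<bullet> x = c}"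
    proof
      fix q assume q: "q \<in> swp_k b P \<inter> {x. a' \<bullet> x = c'}"
      then obtain p t where h: "p \<in> P" "0 \<le> t" "t \<le> p \<bullet> b" "q = p - t *\<^sub>R b"
        using swp_mem[OF pos] by blast
      have "0 \<le> t * (a' \<bullet> b)" using h ab by simp
      moreover have "a \<bullet> p \<le> c" using sub h by auto
      moreover have "a \<bullet> p + \<mu> * \<pi>0 - t * (a' \<bullet> b) = c + \<mu> * \<pi>0"
        using key[OF h(1), of t] q h by (simp add: c'_def)
      ultimately have "t * (a' \<bullet> b) = 0" "a \<bullet> p = c" by linarith+
      then have "t = 0" using ab by simp
      then show "q \<in> P \<inter> {x. a \<bullet> x = c}" using h \<open>a \<bullet> p = c\<close> by simp
    qed
  qed
  have s3: "swp_k b P \<inter> {x. a' \<bullet> x = c'} \<noteq> {}" using s2 ne by simp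
  show ?thesis unfolding is_face_def using a'0 s1 s2 s3 by blast
qed

lemma faceProj:
  assumes bB: "b \<in> Basis" and pos: "\<forall>p\<in>P. p \<bullet> b > 0"
    and sub: "proj_k b P \<subseteq> {x. a \<bullet> x \<le> c}" and ne: "proj_k b P \<inter> {x. a \<bullet> x = c} \<noteq> {}"
  shows "is_face (proj_k b P \<inter> {x. a \<bullet> x = c}) (swp_k b P)"
proof -
  have bb: "b \<bullet> b = 1" using bB by simp
  define a' where "a' = a - (a \<bullet> b + 1) *\<^sub>R b"
  have ab: "a' \<bullet> b = -1" using bb by (simp add: a'_def inner_diff_left)
  have key: "a' \<bullet> (p - t *\<^sub>R b) = a \<bullet> (p - (p \<bullet> b) *\<^sub>R b) - (p \<bullet> b - t)" for p t
  proof -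
    have e1: "b \<bullet> (p - t *\<^sub>R b) = p \<bullet> b - t" using bb by (simp add: inner_diff_right inner_commute)
    have e2: "a \<bullet> (p - t *\<^sub>R b) = a \<bullet> p - t * (a \<bullet> b)" by (simp add: inner_diff_right)
    have e3: "a \<bullet> (p - (p \<bullet> b) *\<^sub>R b) = a \<bullet> p - (p \<bullet> b) * (a \<bullet> b)" by (simp add: inner_diff_right)
    have e4: "a' \<bullet> (p - t *\<^sub>R b) = a \<bullet> (p - t *\<^sub>R b) - (a \<bullet> b + 1) * (b \<bullet> (p - t *\<^sub>R b))"
      unfolding a'_def by (simp only: inner_diff_left inner_scaleR_left)
    show ?thesis unfolding e4 e1 e2 e3 by (simp add: algebra_simps)
  qed
  have a'0: "a' \<noteq> 0" using ab by auto
  have s1: "swp_k b P \<subseteq> {x. a' \<bullet> x \<le> c}"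
  proof
    fix q assume "q \<in> swp_k b P"
    then obtain p t where h: "p \<in> P" "0 \<le> t" "t \<le> p \<bullet> b" "q = p - t *\<^sub>R b"
      using swp_mem[OF pos] by blast
    have "p - (p \<bullet> b) *\<^sub>R b \<in> proj_k b P" using h proj_mem by blast
    then show "q \<in> {x. a' \<bullet> x \<le> c}" using key[of p t] h sub by auto
  qed
  have s2: "proj_k b P \<inter> {x. a \<bullet> x = c} = swp_k b P \<inter> {x. a' \<bullet> x = c}"
  proof
    show "proj_k b P \<inter> {x. a \<bullet> x = c} \<subseteq> swp_k b P \<inter> {x. a' \<bullet> x = c}"
    proof
      fix r assume r: "r \<in> proj_k b P \<inter> {x. a \<bullet> x = c}"
      then obtain p where "p \<in> P" "r = p - (p \<bullet> b) *\<^sub>R b" using proj_mem by blast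
      then show "r \<in> swp_k b P \<inter> {x. a' \<bullet> x = c}" using r key[of p "p \<bullet> b"] proj_sub_swp[of b P]
        by auto
    qed
  next
    show "swp_k b P \<inter> {x. a' \<bullet> x = c} \<subseteq> proj_k b P \<inter> {x. a \<bullet> x = c}"
    proof
      fix q assume q: "q \<in> swp_k b P \<inter> {x. a' \<bullet> x = c}"
      then obtain p t where h: "p \<in> P" "0 \<le> t" "t \<le> p \<bullet> b" "q = p - t *\<^sub>R b"
        using swp_mem[OF pos] by blast
      have r: "p - (p \<bullet> b) *\<^sub>R b \<in> proj_k b P" using h proj_mem by blast
      then have "a \<bullet> (p - (p \<bullet> b) *\<^sub>R b) \<le> c" using sub by auto
      moreover have "a \<bullet> (p - (p \<bullet> b) *\<^sub>R b) - (p \<bullet> b - t) = c" using key[of p t] q h by simp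
      ultimately have "t = p \<bullet> b" "a \<bullet> (p - (p \<bullet> b) *\<^sub>R b) = c" using h by linarith+
      then show "q \<in> proj_k b P \<inter> {x. a \<bullet> x = c}" using h r by simp
    qed
  qed
  have s3: "swp_k b P \<inter> {x. a' \<bullet> x = c} \<noteq> {}" using s2 ne by simp
  show ?thesis unfolding is_face_def using a'0 s1 s2 s3 by blast
qed

lemma faceSwp:
  assumes pos: "\<forall>p\<in>P. p \<bullet> b > 0" and hpb: "\<pi> \<bullet> b > 0" and hp: "\<forall>p\<in>P. \<pi> \<bullet> p = \<pi>0"
    and sub: "P \<subseteq> {x. a \<bullet> x \<le> c}" and ne: "P \<inter> {x. a \<bullet> x = c} \<noteq> {}"
  shows "is_face (swp_k b (P \<inter> {x. a \<bullet> x = c})) (swp_k b P)"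
proof -
  define \<kappa> where "\<kappa> = (a \<bullet> b) / (\<pi> \<bullet> b)"
  define a' where "a' = a - \<kappa> *\<^sub>R \<pi>"
  define c' where "c' = c - \<kappa> * \<pi>0"
  have ab: "a' \<bullet> b = 0" using hpb by (simp add: a'_def \<kappa>_def inner_diff_left)
  have key: "a' \<bullet> (p - t *\<^sub>R b) = a \<bullet> p - \<kappa> * \<pi>0" if "p \<in> P" for p t
    using hp that ab by (simp add: a'_def inner_diff_right inner_diff_left algebra_simps)
  have pos': "\<forall>p\<in>P \<inter> {x. a \<bullet> x = c}. p \<bullet> b > 0" using pos by auto
  show ?thesis
  proof (cases "a' = 0")
    case True
    obtain p0 where p0: "p0 \<in> P" "a \<bullet> p0 = c" using ne by auto
    have "a \<bullet> p = c" if "p \<in> P" for p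
      using key[OF that, of 0] key[OF p0(1), of 0] True p0 by simp
    then have "P \<inter> {x. a \<bullet> x = c} = P" by auto
    then show ?thesis unfolding is_face_def by simp
  next
    case False
    have s1: "swp_k b P \<subseteq> {x. a' \<bullet> x \<le> c'}"
    proof
      fix q assume "q \<in> swp_k b P"
      then obtain p t where h: "p \<in> P" "0 \<le> t" "t \<le> p \<bullet> b" "q = p - t *\<^sub>R b"
        using swp_mem[OF pos] by blast
      then show "q \<in> {x. a' \<bullet> x \<le> c'}" using key[OF h(1), of t] h sub by (auto simp: c'_def)
    qed
    have s2: "swp_k b (P \<inter> {x. a \<bullet> x = c}) = swp_k b P \<inter> {x. a' \<bullet> x = c'}"
    proof
      show "swp_k b (P \<inter> {x. a \<bullet> x = c}) \<subseteq> swp_k b P \<inter> {x. a' \<bullet> x = c'}"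
      proof
        fix q assume "q \<in> swp_k b (P \<inter> {x. a \<bullet> x = c})"
        then obtain p t where h: "p \<in> P" "a \<bullet> p = c" "0 \<le> t" "t \<le> p \<bullet> b" "q = p - t *\<^sub>R b"
          using swp_mem[OF pos'] by blast
        then show "q \<in> swp_k b P \<inter> {x. a' \<bullet> x = c'}"
          using swp_mem[OF pos] key[OF h(1), of t] by (auto simp: c'_def)
      qed
    next
      show "swp_k b P \<inter> {x. a' \<bullet> x = c'} \<subseteq> swp_k b (P \<inter> {x. a \<bullet> x = c})"
      proof
        fix q assume q: "q \<in> swp_k b P \<inter> {x. a' \<bullet> x = c'}"
        then obtain p t where h: "p \<in> P" "0 \<le> t" "t \<le> p \<bullet> b" "q = p - t *\<^sub>R b"
          using swp_mem[OF pos] by blast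
        have "a \<bullet> p = c" using key[OF h(1), of t] q h by (simp add: c'_def)
        then show "q \<in> swp_k b (P \<inter> {x. a \<bullet> x = c})" using swp_mem[OF pos'] h by blast
      qed
    qed
    have s3: "swp_k b P \<inter> {x. a' \<bullet> x = c'} \<noteq> {}"
      using s2 ne P_sub_swp[of "P \<inter> {x. a \<bullet> x = c}" b] by auto
    show ?thesis unfolding is_face_def using False s1 s2 s3 by blast
  qed
qed

lemma swp_dim:
  assumes pos: "\<forall>p\<in>P. p \<bullet> b > 0" and hpb: "\<pi> \<bullet> b > 0" and hp: "\<forall>p\<in>P. \<pi> \<bullet> p = \<pi>0"
    and ne: "P \<noteq> {}"
  shows "aff_dim (swp_k b P) = aff_dim P + 1"
proof -
  obtain g where g: "g \<in> P" using ne by auto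
  define s where "s = g \<bullet> b"
  have s0: "s > 0" using g pos by (auto simp: s_def)
  define w where "w = g - s *\<^sub>R b"
  have "w \<in> proj_k b P" unfolding proj_mem w_def s_def using g by blast
  then have wS: "w \<in> swp_k b P" using proj_sub_swp[of b P] by blast
  have "affine hull P \<subseteq> {x. \<pi> \<bullet> x = \<pi>0}"
    using hp by (intro hull_minimal) (auto simp: affine_hyperplane)
  moreover have "\<pi> \<bullet> w \<noteq> \<pi>0" using hp g s0 hpb by (simp add: w_def inner_diff_right)
  ultimately have wn: "w \<notin> affine hull P" by auto
  have d1: "aff_dim (insert w P) = aff_dim P + 1" using wn by (simp only: aff_dim_insert[of w P] if_False)
  have i1: "insert w P \<subseteq> swp_k b P" using wS P_sub_swp by blast
  have i2: "swp_k b P \<subseteq> affine hull (insert w P)"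
  proof
    fix q assume "q \<in> swp_k b P"
    then obtain p t where h: "p \<in> P" "0 \<le> t" "t \<le> p \<bullet> b" "q = p - t *\<^sub>R b"
      using swp_mem[OF pos] by blast
    have "p + (t / s) *\<^sub>R (w - g) \<in> affine hull (insert w P)"
      by (rule mem_affine_3_minus) (use h g in \<open>auto intro: hull_inc\<close>)
    moreover have "p + (t / s) *\<^sub>R (w - g) = q" using s0 h by (simp add: w_def)
    ultimately show "q \<in> affine hull (insert w P)" by simp
  qed
  have "aff_dim (insert w P) \<le> aff_dim (swp_k b P)" using i1 aff_dim_subset by blast
  moreover have "aff_dim (swp_k b P) \<le> aff_dim (affine hull (insert w P))" using i2 aff_dim_subset by blast
  ultimately show ?thesis using d1 by simp
qed

lemma swp_polytope:
  assumes pos: "\<forall>p\<in>P. p \<bullet> b > 0" and pt: "polytope P"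
  shows "polytope (swp_k b P)"
proof -
  obtain S where S: "finite S" "P = convex hull S" using pt unfolding polytope_def by blast
  define f where "f = (\<lambda>x::'a. x - (x \<bullet> b) *\<^sub>R b)"
  have lf: "linear f" unfolding f_def
    by (rule linearI) (simp_all add: algebra_simps inner_add_left)
  have "swp_k b P = convex hull (S \<union> f ` S)"
  proof
    show "convex hull (S \<union> f ` S) \<subseteq> swp_k b P"
    proof (rule hull_minimal)
      show "convex (swp_k b P)" using swp_convex[OF pos] S by simp
      have "S \<subseteq> P" using S(2) hull_subset[of S convex] by simp
      moreover have "f ` S \<subseteq> proj_k b P" unfolding image_subset_iff f_def proj_mem using \<open>S \<subseteq> P\<close> by blast
      ultimately show "S \<union> f ` S \<subseteq> swp_k b P" using P_sub_swp proj_sub_swp by blast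
    qed
  next
    show "swp_k b P \<subseteq> convex hull (S \<union> f ` S)"
    proof
      fix q assume "q \<in> swp_k b P"
      then obtain p t where h: "p \<in> P" "0 \<le> t" "t \<le> p \<bullet> b" "q = p - t *\<^sub>R b"
        using swp_mem[OF pos] by blast
      have pb: "p \<bullet> b > 0" using pos h by auto
      define \<theta> where "\<theta> = t / (p \<bullet> b)"
      have th: "0 \<le> \<theta>" "\<theta> \<le> 1" using h pb by (auto simp: \<theta>_def field_simps)
      have p1: "p \<in> convex hull (S \<union> f ` S)" using h S hull_mono[of S "S \<union> f ` S"] by auto
      have "f p \<in> f ` (convex hull S)" using h S by auto
      then have "f p \<in> convex hull (f ` S)" using convex_hull_linear_image[OF lf] by simp
      then have p2: "f p \<in> convex hull (S \<union> f ` S)" using hull_mono[of "f ` S" "S \<union> f ` S"] by auto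
      have "(1 - \<theta>) *\<^sub>R p + \<theta> *\<^sub>R f p \<in> convex hull (S \<union> f ` S)"
        by (rule convexD) (use p1 p2 th in auto)
      moreover have "(1 - \<theta>) *\<^sub>R p + \<theta> *\<^sub>R f p = q"
        using h pb by (simp add: f_def \<theta>_def algebra_simps)
      ultimately show "q \<in> convex hull (S \<union> f ` S)" by simp
    qed
  qed
  then show ?thesis unfolding polytope_def using S by blast
qed

theorem proposition5:
  fixes P :: "'a::euclidean_space set" and b :: 'a and n :: nat
  assumes "b \<in> Basis"
    and "polytope P"
    and "P \<subseteq> {x. x \<bullet> b > 0}"
    and "aff_dim P = int n"
    and "n \<le> DIM('a) - 1"
    and "\<exists>\<pi> \<pi>0. \<pi> \<bullet> b \<noteq> 0 \<and> P \<subseteq> {x. \<pi> \<bullet> x = \<pi>0}"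
  shows "(polytope (swp_k b P) \<and> aff_dim (swp_k b P) = int n + 1) \<and>
         (\<forall>F l. is_face F (swp_k b P) \<and> aff_dim F = l \<longrightarrow>
           (is_face F P \<and> aff_dim F = l) \<or>
           (is_face F (proj_k b P) \<and> aff_dim F = l) \<or>
           (\<exists>G. is_face G P \<and> aff_dim G = l - 1 \<and> F = swp_k b G)) \<and>
         (\<forall>G. is_face G P \<longrightarrow> is_face G (swp_k b P)) \<and>
         (\<forall>G. is_face G (proj_k b P) \<longrightarrow> is_face G (swp_k b P)) \<and>
         (\<forall>G. is_face G P \<longrightarrow> is_face (swp_k b G) (swp_k b P))"
proof -
  have pos: "\<forall>p\<in>P. p \<bullet> b > 0" using assms(3) by auto
  have ne: "P \<noteq> {}" using assms(4) by auto
  obtain \<pi>1 \<pi>01 where h1: "\<pi>1 \<bullet> b \<noteq> 0" "P \<subseteq> {x. \<pi>1 \<bullet> x = \<pi>01}" using assms(6) by blast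
  define \<pi> where "\<pi> = (if \<pi>1 \<bullet> b > 0 then \<pi>1 else - \<pi>1)"
  define \<pi>0 where "\<pi>0 = (if \<pi>1 \<bullet> b > 0 then \<pi>01 else - \<pi>01)"
  have hpb: "\<pi> \<bullet> b > 0" using h1 by (auto simp: \<pi>_def)
  have hp: "\<forall>p\<in>P. \<pi> \<bullet> p = \<pi>0" using h1 by (auto simp: \<pi>_def \<pi>0_def)
  have dimS: "aff_dim (swp_k b P) = int n + 1" using swp_dim[OF pos hpb hp ne] assms(4) by simp
  have PP: "P \<inter> {x. 0 \<bullet> x = (0::real)} = P" by simp
  have P0: "P \<subseteq> {x. 0 \<bullet> x \<le> (0::real)}" "P \<inter> {x. 0 \<bullet> x = (0::real)} \<noteq> {}" using ne by auto
  have part2: "(is_face F P \<and> aff_dim F = l) \<or>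
           (is_face F (proj_k b P) \<and> aff_dim F = l) \<or>
           (\<exists>G. is_face G P \<and> aff_dim G = l - 1 \<and> F = swp_k b G)"
    if F: "is_face F (swp_k b P)" and l: "aff_dim F = l" for F l
  proof -
    from F consider "F = swp_k b P"
      | a c where "a \<noteq> 0" "swp_k b P \<subseteq> {x. a \<bullet> x \<le> c}" "swp_k b P \<inter> {x. a \<bullet> x = c} \<noteq> {}"
            "F = swp_k b P \<inter> {x. a \<bullet> x = c}"
      unfolding is_face_def by blast
    then show ?thesis
    proof cases
      case 1
      have "is_face P P" unfolding is_face_def by simp
      moreover have "aff_dim P = l - 1" using 1 l dimS assms(4) by simp
      ultimately show ?thesis using 1 by blast
    next
      case 2
      note a = 2
      have Psub: "P \<subseteq> {x. a \<bullet> x \<le> c}" using a(2) P_sub_swp[of P b] by blast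
      have prsub: "proj_k b P \<subseteq> {x. a \<bullet> x \<le> c}" using a(2) proj_sub_swp[of b P] by blast
      have key: "a \<bullet> (p - t *\<^sub>R b) = a \<bullet> p - t * (a \<bullet> b)" for p t by (simp add: inner_diff_right)
      consider "a \<bullet> b > 0" | "a \<bullet> b < 0" | "a \<bullet> b = 0" by linarith
      then show ?thesis
      proof cases
        case 1
        have "F = P \<inter> {x. a \<bullet> x = c}"
        proof
          show "F \<subseteq> P \<inter> {x. a \<bullet> x = c}"
          proof
            fix q assume q: "q \<in> F"
            then obtain p t where h: "p \<in> P" "0 \<le> t" "t \<le> p \<bullet> b" "q = p - t *\<^sub>R b"
              using a(4) swp_mem[OF pos] by blast
            have "0 \<le> t * (a \<bullet> b)" using h 1 by simp
            moreover have "a \<bullet> p \<le> c" using Psub h by auto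
            moreover have "a \<bullet> p - t * (a \<bullet> b) = c" using q a(4) h key by simp
            ultimately have "t * (a \<bullet> b) = 0" "a \<bullet> p = c" by linarith+
            then have "t = 0" using 1 by simp
            then show "q \<in> P \<inter> {x. a \<bullet> x = c}" using h \<open>a \<bullet> p = c\<close> by simp
          qed
        next
          show "P \<inter> {x. a \<bullet> x = c} \<subseteq> F" using a(4) P_sub_swp[of P b] by blast
        qed
        moreover have "F \<noteq> {}" using a by blast
        ultimately have "is_face F P" unfolding is_face_def using a(1) Psub by blast
        then show ?thesis using l by blast
      next
        case 2
        have "F = proj_k b P \<inter> {x. a \<bullet> x = c}"
        proof
          show "F \<subseteq> proj_k b P \<inter> {x. a \<bullet> x = c}"
          proof
            fix q assume q: "q \<in> F"
            then obtain p t where h: "p \<in> P" "0 \<le> t" "t \<le> p \<bullet> b" "q = p - t *\<^sub>R b"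
              using a(4) swp_mem[OF pos] by blast
            have r: "p - (p \<bullet> b) *\<^sub>R b \<in> proj_k b P" using h proj_mem by blast
            have "0 \<le> (p \<bullet> b - t) * (- (a \<bullet> b))" by (rule mult_nonneg_nonneg) (use h 2 in auto)
            moreover have "a \<bullet> p - (p \<bullet> b) * (a \<bullet> b) \<le> c" using prsub r key[of p "p \<bullet> b"] by auto
            moreover have "a \<bullet> p - t * (a \<bullet> b) = c" using q a(4) h key by simp
            moreover have "(p \<bullet> b - t) * (a \<bullet> b) = (a \<bullet> p - t * (a \<bullet> b)) - (a \<bullet> p - (p \<bullet> b) * (a \<bullet> b))"
              by (simp add: algebra_simps)
            ultimately have "(p \<bullet> b - t) * (a \<bullet> b) = 0" "a \<bullet> p - (p \<bullet> b) * (a \<bullet> b) = c"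
              by linarith+
            then have "t = p \<bullet> b" using 2 by simp
            then show "q \<in> proj_k b P \<inter> {x. a \<bullet> x = c}" using h r q a(4) by simp
          qed
        next
          show "proj_k b P \<inter> {x. a \<bullet> x = c} \<subseteq> F" using a(4) proj_sub_swp[of b P] by blast
        qed
        moreover have "F \<noteq> {}" using a by blast
        ultimately have "is_face F (proj_k b P)" unfolding is_face_def using a(1) prsub by blast
        then show ?thesis using l by blast
      next
        case 3
        define G where "G = P \<inter> {x. a \<bullet> x = c}"
        have pos': "\<forall>p\<in>G. p \<bullet> b > 0" using pos by (auto simp: G_def)
        have "F = swp_k b G"
        proof
          show "F \<subseteq> swp_k b G"
          proof
            fix q assume q: "q \<in> F"
            then obtain p t where h: "p \<in> P" "0 \<le> t" "t \<le> p \<bullet> b" "q = p - t *\<^sub>R b"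
              using a(4) swp_mem[OF pos] by blast
            have "a \<bullet> p = c" using q a(4) h key 3 by simp
            then show "q \<in> swp_k b G" using swp_mem[OF pos'] h by (auto simp: G_def)
          qed
        next
          show "swp_k b G \<subseteq> F"
          proof
            fix q assume "q \<in> swp_k b G"
            then obtain p t where h: "p \<in> P" "a \<bullet> p = c" "0 \<le> t" "t \<le> p \<bullet> b" "q = p - t *\<^sub>R b"
              using swp_mem[OF pos'] by (auto simp: G_def)
            then show "q \<in> F" using swp_mem[OF pos] key 3 a(4) by auto
          qed
        qed
        moreover have Gne: "G \<noteq> {}"
        proof
          assume "G = {}"
          then have "F = {}" using calculation by (simp add: swp_k_def)
          then show False using a by blast
        qed
        ultimately have "is_face G P" unfolding is_face_def G_def using a(1) Psub by blast
        moreover have "aff_dim F = aff_dim G + 1"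
          using \<open>F = swp_k b G\<close> swp_dim[OF pos' hpb _ Gne, of \<pi>0] hp by (auto simp: G_def)
        ultimately show ?thesis using \<open>F = swp_k b G\<close> l by auto
      qed
    qed
  qed
  have part3: "is_face G (swp_k b P)" if "is_face G P" for G
  proof -
    from that consider "G = P"
      | a c where "P \<subseteq> {x. a \<bullet> x \<le> c}" "P \<inter> {x. a \<bullet> x = c} \<noteq> {}" "G = P \<inter> {x. a \<bullet> x = c}"
      unfolding is_face_def by blast
    then show ?thesis
    proof cases
      case 1 then show ?thesis using faceP[OF pos hpb hp P0] PP by simp
    next
      case 2 then show ?thesis using faceP[OF pos hpb hp] by blast
    qed
  qed
  have part5: "is_face (swp_k b G) (swp_k b P)" if "is_face G P" for G
  proof -
    from that consider "G = P"
      | a c where "P \<subseteq> {x. a \<bullet> x \<le> c}" "P \<inter> {x. a \<bullet> x = c} \<noteq> {}" "G = P \<inter> {x. a \<bullet> x = c}"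
      unfolding is_face_def by blast
    then show ?thesis
    proof cases
      case 1 then show ?thesis unfolding is_face_def by simp
    next
      case 2 then show ?thesis using faceSwp[OF pos hpb hp] by blast
    qed
  qed
  have pr0: "proj_k b P \<subseteq> {x. 0 \<bullet> x \<le> (0::real)}" "proj_k b P \<inter> {x. 0 \<bullet> x = (0::real)} \<noteq> {}"
    using ne by (auto simp: proj_k_def)
  have prP: "proj_k b P \<inter> {x. 0 \<bullet> x = (0::real)} = proj_k b P" by simp
  have part4: "is_face G (swp_k b P)" if "is_face G (proj_k b P)" for G
  proof -
    from that consider "G = proj_k b P"
      | a c where "proj_k b P \<subseteq> {x. a \<bullet> x \<le> c}" "proj_k b P \<inter> {x. a \<bullet> x = c} \<noteq> {}"
          "G = proj_k b P \<inter> {x. a \<bullet> x = c}"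
      unfolding is_face_def by blast
    then show ?thesis
    proof cases
      case 1 then show ?thesis using faceProj[OF assms(1) pos pr0] prP by simp
    next
      case 2 then show ?thesis using faceProj[OF assms(1) pos] by blast
    qed
  qed
  show ?thesis
    using swp_polytope[OF pos assms(2)] dimS part2 part3 part4 part5 by blast
qed

end
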